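(* Let $A$ be an invertible $n\times n$ real matrix, $b\in\mathbb{R}^n$, and let $x^*=A^{-1}b$ with $i$-th component $x^*_i$. Let $Q=A^TA$, $w=A^Tb$, let $q_j$ denote the $j$-th column of $Q$, let $q_{\min}=\min\{\Vert q_j\Vert : j=1,\dots,n\}$, and let $\lambda_{\min}$ be the minimum eigenvalue of $Q$. Set $$\tau_*=\Big(\prod_{j=1}^n \Vert q_j\Vert\Big)\frac{\Vert w\Vert}{q_{\min}\,\lambda_{\min}^n},\qquad \tau'_*=\Big(\prod_{j=1}^n \Vert q_j\Vert\Big)\frac{\Vert w\Vert}{q_{\min}\,\det(Q)}.$$ Then for every $i=1,\dots,n$, $$x^*_i\geq -\tau'_*\geq -\tau_*.$$ In particular $\tau_*\geq\tau'_*\geq t_*$, where $$t_*=\min\big\{t : \text{there exists } x\in\mathbb{R}^n \text{ with } x\geq 0 \text{ and } A(x-te)=b\big\}$$ and $e=(1,\dots,1)^T\in\mathbb{R}^n$.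
   Context: $\Vert\cdot\Vert$ denotes the Euclidean norm. Inequalities between vectors ($x\geq 0$) are componentwise. *)

theory Defs
  imports "HOL-Analysis.Analysis"
begin

text \<open>Real eigenvalues of a square matrix, and the minimum eigenvalue
  (used for symmetric matrices, whose eigenvalues are all real).\<close>
definition mat_eigenvalues :: "real^'n^'n \<Rightarrow> real set" where
  "mat_eigenvalues M = {l. \<exists>v. v \<noteq> 0 \<and> M *v v = l *\<^sub>R v}"

definition min_eigenvalue :: "real^'n^'n \<Rightarrow> real" where
  "min_eigenvalue M = Min (mat_eigenvalues M)"

definition t_star :: "real^'n^'n \<Rightarrow> real^'n \<Rightarrow> real" where
  "t_star A b = Inf {t. \<exists>x::real^'n. (\<forall>i. x $ i \<ge> 0) \<and> A *v (x - t *\<^sub>R (1::real^'n)) = b}"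

end

theory Submission
  imports Defs
begin

lemma sym_dot:
  fixes S :: "real^'n^'n"
  assumes "transpose S = S"
  shows "x \<bullet> (S *v y) = (S *v x) \<bullet> y"
  by (metis assms dot_lmul_matrix vector_transpose_matrix)

lemma quad_nonneg_zero:
  fixes c d :: real
  assumes "\<And>t. 2*t*c + t^2 * d \<ge> 0"
  shows "c = 0"
proof (rule ccontr)
  assume c: "c \<noteq> 0"
  obtain k where pos: "k > 0" and dk: "d < 2*k" by (rule that[of "\<bar>d\<bar> + 1"]) auto
  define t where "t = - c / k"
  have "2*t*c + t^2 * d = c^2 * (d - 2*k) / k^2"
    unfolding t_def using pos by (simp add: field_simps power2_eq_square)
  moreover have "c^2 * (d - 2*k) < 0"
    using c dk by (intro mult_pos_neg) auto
  ultimately have "2*t*c + t^2 * d < 0" using pos by (simp add: divide_neg_pos)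
  with assms[of t] show False by linarith
qed

lemma sym_eigvec:
  fixes S :: "real^'n^'n"
  assumes sym: "transpose S = S" and V: "subspace V" "V \<noteq> {0}"
    and inv: "\<And>x. x \<in> V \<Longrightarrow> S *v x \<in> V"
  obtains u l where "u \<in> V" "norm u = 1" "S *v u = l *\<^sub>R u"
proof -
  define K where "K = V \<inter> sphere 0 1"
  have "compact K" unfolding K_def
    using V(1) by (intro closed_Int_compact) (auto simp: closed_subspace)
  obtain z where z: "z \<in> V" "z \<noteq> 0" using V subspace_0 by blast
  have "z /\<^sub>R norm z \<in> K" using z V(1) by (auto simp: K_def subspace_scale)
  hence "K \<noteq> {}" by blast
  have "continuous_on K (\<lambda>x. x \<bullet> (S *v x))"
    by (intro continuous_intros linear_continuous_on matrix_vector_mul_bounded_linear)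
  then obtain u where u: "u \<in> K" and umin: "\<And>y. y \<in> K \<Longrightarrow> u \<bullet> (S *v u) \<le> y \<bullet> (S *v y)"
    using continuous_attains_inf[OF \<open>compact K\<close> \<open>K \<noteq> {}\<close>] by blast
  define m where "m = u \<bullet> (S *v u)"
  have uV: "u \<in> V" and nu: "norm u = 1" using u by (auto simp: K_def)
  have uu: "u \<bullet> u = 1" using nu by (simp add: norm_eq_1)
  have key: "v \<bullet> (S *v u) = 0" if vV: "v \<in> V" and vu: "u \<bullet> v = 0" for v
  proof -
    define c where "c = v \<bullet> (S *v u)"
    define d where "d = v \<bullet> (S *v v) - m * (v \<bullet> v)"
    have "2*t*c + t^2*d \<ge> 0" for t
    proof -
      define y where "y = u + t *\<^sub>R v"
      have yy: "y \<bullet> y = 1 + t^2 * (v \<bullet> v)"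
        unfolding y_def using uu vu by (simp add: algebra_simps inner_commute power2_eq_square)
      hence ypos: "y \<bullet> y > 0" by (simp add: add_pos_nonneg)
      hence "norm y > 0" by (metis inner_gt_zero_iff zero_less_norm_iff)
      have "y \<in> V" unfolding y_def using uV vV V(1) by (simp add: subspace_add subspace_scale)
      hence "y /\<^sub>R norm y \<in> K" using \<open>norm y > 0\<close> V(1) by (auto simp: K_def subspace_scale)
      hence "m \<le> (y /\<^sub>R norm y) \<bullet> (S *v (y /\<^sub>R norm y))" using umin m_def by blast
      also have "\<dots> = (y \<bullet> (S *v y)) / (y \<bullet> y)"
        using \<open>norm y > 0\<close> by (simp add: matrix_vector_mult_scaleR power2_norm_eq_inner[symmetric] power2_eq_square field_simps)
      finally have "m * (y \<bullet> y) \<le> y \<bullet> (S *v y)" using ypos by (simp add: field_simps)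
      moreover have "y \<bullet> (S *v y) = m + 2*t*c + t^2 * (v \<bullet> (S *v v))"
        unfolding y_def m_def c_def
        using sym_dot[OF sym, of u v]
        by (simp add: matrix_vector_mult_scaleR matrix_vector_right_distrib algebra_simps inner_commute power2_eq_square)
      ultimately show ?thesis unfolding d_def yy by (simp add: algebra_simps)
    qed
    thus ?thesis using quad_nonneg_zero c_def by blast
  qed
  define l where "l = u \<bullet> (S *v u)"
  define r where "r = S *v u - l *\<^sub>R u"
  have rV: "r \<in> V" unfolding r_def using inv[OF uV] uV V(1) by (simp add: subspace_diff subspace_scale)
  have "u \<bullet> r = 0" unfolding r_def l_def using uu by (simp add: algebra_simps)
  hence "r \<bullet> (S *v u) = 0" using key rV by blast
  moreover have "r \<bullet> u = 0" using \<open>u \<bullet> r = 0\<close> by (simp add: inner_commute)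
  ultimately have "r \<bullet> r = 0" unfolding r_def[of] by (simp add: inner_diff_right)
  hence "r = 0" by simp
  hence "S *v u = l *\<^sub>R u" unfolding r_def by simp
  thus ?thesis using that uV nu by blast
qed

lemma sym_basis_aux:
  fixes S :: "real^'n^'n"
  assumes sym: "transpose S = S"
  shows "\<And>V. dim V = k \<Longrightarrow> subspace V \<Longrightarrow> (\<And>x. x \<in> V \<Longrightarrow> S *v x \<in> V) \<Longrightarrow>
    \<exists>B. B \<subseteq> V \<and> pairwise orthogonal B \<and> (\<forall>x\<in>B. norm x = 1 \<and> (\<exists>l. S *v x = l *\<^sub>R x)) \<and> span B = V"
proof (induction k rule: less_induct)
  case (less k V)
  show ?case
  proof (cases "V = {0}")
    case True
    thus ?thesis by (intro exI[of _ "{}"]) auto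
  next
    case False
    obtain u l where u: "u \<in> V" "norm u = 1" "S *v u = l *\<^sub>R u"
      using sym_eigvec[OF sym less.prems(2) False less.prems(3)] by blast
    define V' where "V' = V \<inter> {x. u \<bullet> x = 0}"
    have sV': "subspace V'" unfolding V'_def
    proof (rule subspace_inter[OF less.prems(2)])
      show "subspace {x. u \<bullet> x = 0}" by (auto simp: subspace_def inner_add_right)
    qed
    have invV': "S *v x \<in> V'" if "x \<in> V'" for x
    proof -
      have "u \<bullet> (S *v x) = (S *v u) \<bullet> x" using sym_dot[OF sym] by blast
      also have "\<dots> = 0" using that u(3) by (simp add: V'_def)
      finally show ?thesis using that less.prems(3) by (auto simp: V'_def)
    qed
    have "u \<notin> V'" using u(2) by (auto simp: V'_def norm_eq_1)
    have e1: "span V' = V'" using sV' by (simp add: span_eq_iff)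
    have e2: "span V = V" using less.prems(2) by (simp add: span_eq_iff)
    have "V' \<subseteq> V" by (simp add: V'_def)
    hence "span V' \<subset> span V" unfolding e1 e2 using u(1) \<open>u \<notin> V'\<close> by blast
    hence "dim V' < k" using dim_psubset less.prems(1) by blast
    then obtain B' where B': "B' \<subseteq> V'" "pairwise orthogonal B'"
      "\<forall>x\<in>B'. norm x = 1 \<and> (\<exists>l. S *v x = l *\<^sub>R x)" "span B' = V'"
      using less.IH[OF _ refl sV' invV'] by blast
    have orth: "orthogonal u x" if "x \<in> B'" for x using that B'(1) by (auto simp: V'_def orthogonal_def)
    show ?thesis
    proof (intro exI[of _ "insert u B'"] conjI)
      show "insert u B' \<subseteq> V" using u(1) B'(1) V'_def by auto
      show "pairwise orthogonal (insert u B')" using B'(2) orth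
        by (auto simp: pairwise_insert orthogonal_commute)
      show "\<forall>x\<in>insert u B'. norm x = 1 \<and> (\<exists>l. S *v x = l *\<^sub>R x)" using u B'(3) by auto
      show "span (insert u B') = V"
      proof
        show "span (insert u B') \<subseteq> V" using u(1) B'(1) less.prems(2) V'_def
          by (intro span_minimal) auto
        show "V \<subseteq> span (insert u B')"
        proof
          fix x assume x: "x \<in> V"
          define y where "y = x - (u \<bullet> x) *\<^sub>R u"
          have "u \<bullet> u = 1" using u(2) by (simp add: norm_eq_1)
          moreover have "y \<in> V" using x u(1) less.prems(2) unfolding y_def
            by (simp add: subspace_diff subspace_scale)
          moreover have "u \<bullet> y = 0" unfolding y_def using \<open>u \<bullet> u = 1\<close> by (simp add: inner_diff_right)
          ultimately have "y \<in> V'" unfolding V'_def by simp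
          hence "y \<in> span B'" using B'(4) by simp
          hence "y \<in> span (insert u B')" by (meson span_mono subset_insertI subsetD)
          moreover have "(u \<bullet> x) *\<^sub>R u \<in> span (insert u B')" by (simp add: span_base span_mul)
          ultimately have "y + (u \<bullet> x) *\<^sub>R u \<in> span (insert u B')" by (rule span_add)
          thus "x \<in> span (insert u B')" by (simp add: y_def)
        qed
      qed
    qed
  qed
qed

lemma sym_spectral:
  fixes S :: "real^'n^'n"
  assumes sym: "transpose S = S"
  obtains f :: "'n \<Rightarrow> real^'n" and l where "\<And>j. norm (f j) = 1"
    "\<And>i j. i \<noteq> j \<Longrightarrow> orthogonal (f i) (f j)" "\<And>j. S *v f j = l j *\<^sub>R f j"
proof -
  obtain B where B: "pairwise orthogonal B" "\<forall>x\<in>B. norm x = 1 \<and> (\<exists>l. S *v x = l *\<^sub>R x)"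
    "span B = UNIV"
    using sym_basis_aux[OF sym refl, of UNIV] by auto
  have "0 \<notin> B" using B(2) by force
  hence ind: "independent B" using B(1) pairwise_orthogonal_independent by blast
  have "card B = dim (UNIV :: (real^'n) set)" using basis_card_eq_dim[of B UNIV] ind B(3) by auto
  hence cB: "card B = CARD('n)" by (simp add: dim_UNIV)
  have "finite B" using ind finiteI_independent by blast
  then obtain f where f: "bij_betw f (UNIV::'n set) B"
    using finite_same_card_bij[of "UNIV::'n set" B] cB by auto
  have fB: "f j \<in> B" for j using bij_betwE[OF f] by blast
  have "\<forall>j. \<exists>c. S *v f j = c *\<^sub>R f j"
    using B(2) fB by blast
  from choice[OF this] obtain l where "\<And>j. S *v f j = l j *\<^sub>R f j" by blast
  moreover have "\<And>j. norm (f j) = 1" using B(2) fB by blast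
  moreover have "orthogonal (f i) (f j)" if "i \<noteq> j" for i j
  proof -
    have "f i \<noteq> f j" using f that by (auto simp: bij_betw_def inj_on_def)
    thus ?thesis using B(1) fB unfolding pairwise_def by blast
  qed
  ultimately show ?thesis using that by blast
qed



definition diagm :: "('n \<Rightarrow> real) \<Rightarrow> real^'n^'n" where
  "diagm l = (\<chi> i j. if i = j then l j else 0)"

lemma sym_decomp:
  fixes S :: "real^'n^'n"
  assumes sym: "transpose S = S"
  obtains P :: "real^'n^'n" and l :: "'n \<Rightarrow> real" where "transpose P ** P = mat 1" "P ** transpose P = mat 1" "S ** P = P ** diagm l"
     "\<And>j. S *v column j P = l j *\<^sub>R column j P" "\<And>j. column j P \<noteq> 0"
proof -
  obtain f :: "'n \<Rightarrow> real^'n" and l where f: "\<And>j. norm (f j) = 1"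
    "\<And>i j. i \<noteq> j \<Longrightarrow> orthogonal (f i) (f j)" "\<And>j. S *v f j = l j *\<^sub>R f j"
    using sym_spectral[OF sym] by blast
  define P where "P = (\<chi> i j. f j $ i)"
  have col: "column j P = f j" for j by (simp add: P_def column_def)
  have "orthogonal_matrix P" using f by (simp add: orthogonal_matrix_orthonormal_columns col)
  hence o1: "transpose P ** P = mat 1" and o2: "P ** transpose P = mat 1"
    by (auto simp: orthogonal_matrix_def)
  have SP: "S ** P = P ** diagm l"
  proof -
    have "(S ** P) $ i $ j = (P ** diagm l) $ i $ j" for i j
    proof -
      have "(S ** P) $ i $ j = (S *v f j) $ i"
        by (simp add: matrix_matrix_mult_def matrix_vector_mult_def P_def)
      also have "\<dots> = l j * f j $ i" using f(3) by simp
      also have "\<dots> = (P ** diagm l) $ i $ j"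
        by (simp add: matrix_matrix_mult_def diagm_def P_def if_distrib cong: if_cong)
      finally show ?thesis .
    qed
    thus ?thesis by (simp add: vec_eq_iff)
  qed
  show ?thesis
  proof (rule that[OF o1 o2 SP])
    show "S *v column j P = l j *\<^sub>R column j P" for j by (simp add: f(3) col)
    show "column j P \<noteq> 0" for j using f(1)[of j] col by auto
  qed
qed

lemma sym_facts:
  fixes S :: "real^'n^'n"
  assumes sym: "transpose S = S"
  obtains l :: "'n \<Rightarrow> real" where "det S = (\<Prod>j\<in>UNIV. l j)" "trace S = (\<Sum>j\<in>UNIV. l j)"
    "mat_eigenvalues S = range l"
proof -
  obtain P :: "real^'n^'n" and l :: "'n \<Rightarrow> real" where P: "transpose P ** P = mat 1" "P ** transpose P = mat 1" "S ** P = P ** diagm l"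
     "\<And>j. S *v column j P = l j *\<^sub>R column j P" "\<And>j. column j P \<noteq> 0"
    using sym_decomp[OF sym] by blast
  have "S = S ** (P ** transpose P)" by (simp add: P(2))
  also have "\<dots> = (S ** P) ** transpose P" by (simp add: matrix_mul_assoc)
  finally have Seq: "S = P ** diagm l ** transpose P" by (simp add: P(3))
  have dd: "det (diagm l) = (\<Prod>j\<in>UNIV. l j)" by (subst det_diagonal) (auto simp: diagm_def)
  have "det (transpose P) * det P = 1" using P(1) by (metis det_I det_mul)
  hence "det S = (\<Prod>j\<in>UNIV. l j)" unfolding Seq by (simp add: det_mul dd algebra_simps)
  moreover have "trace S = (\<Sum>j\<in>UNIV. l j)"
  proof -
    have "trace S = trace (P ** (diagm l ** transpose P))" unfolding Seq by (simp add: matrix_mul_assoc)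
    also have "\<dots> = trace ((diagm l ** transpose P) ** P)" by (rule trace_mul_sym)
    also have "\<dots> = trace (diagm l)" by (simp add: matrix_mul_assoc[symmetric] P(1))
    also have "\<dots> = (\<Sum>j\<in>UNIV. l j)" by (simp add: trace_def diagm_def)
    finally show ?thesis .
  qed
  moreover have "mat_eigenvalues S = range l"
  proof
    show "range l \<subseteq> mat_eigenvalues S" using P(4,5) by (auto simp: mat_eigenvalues_def)
    show "mat_eigenvalues S \<subseteq> range l"
    proof
      fix m assume "m \<in> mat_eigenvalues S"
      then obtain x where x: "x \<noteq> 0" "S *v x = m *\<^sub>R x" by (auto simp: mat_eigenvalues_def)
      show "m \<in> range l"
      proof (rule ccontr)
        assume nm: "m \<notin> range l"
        have "column j P \<bullet> x = 0" for j
        proof -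
          have "column j P \<bullet> (S *v x) = (S *v column j P) \<bullet> x" by (rule sym_dot[OF sym])
          hence "m * (column j P \<bullet> x) = l j * (column j P \<bullet> x)" using x(2) P(4) by simp
          moreover have "m \<noteq> l j" using nm by auto
          ultimately show ?thesis by simp
        qed
        hence "transpose P *v x = 0"
          by (simp add: vec_eq_iff matrix_vector_mult_def column_def transpose_def inner_vec_def)
        have "x = (P ** transpose P) *v x" by (simp add: P(2))
        also have "\<dots> = P *v (transpose P *v x)" by (simp only: matrix_vector_mul_assoc)
        also have "\<dots> = 0" using \<open>transpose P *v x = 0\<close> by simp
        finally have "x = 0" .
        with x show False by simp
      qed
    qed
  qed
  ultimately show ?thesis using that by blast
qed


lemma gram_sym: "transpose (transpose A ** A) = transpose A ** (A::real^'n^'n)"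
  by (simp add: matrix_transpose_mul)

lemma gram_quad: "x \<bullet> ((transpose A ** A) *v x) = (A *v x) \<bullet> (A *v (x::real^'n))"
  by (metis dot_lmul_matrix matrix_vector_mul_assoc vector_transpose_matrix)

lemma pd_eig_pos:
  fixes A :: "real^'n^'n"
  assumes "det A \<noteq> 0" "m \<in> mat_eigenvalues (transpose A ** A)"
  shows "m > 0"
proof -
  obtain x where x: "x \<noteq> 0" "(transpose A ** A) *v x = m *\<^sub>R x"
    using assms(2) by (auto simp: mat_eigenvalues_def)
  have "A *v x \<noteq> 0"
  proof
    assume "A *v x = 0"
    hence "\<not> inj ((*v) A)" using x(1) by (metis inj_eq matrix_vector_mult_0_right)
    thus False using assms(1)
      by (metis invertible_det_nz invertible_left_inverse matrix_left_invertible_injective)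
  qed
  hence "(A *v x) \<bullet> (A *v x) > 0" by simp
  hence "m * (x \<bullet> x) > 0" using gram_quad[of x A] x(2) by simp
  moreover have "x \<bullet> x > 0" using x(1) by simp
  ultimately show ?thesis by (simp add: zero_less_mult_iff)
qed

lemma prod_le_one:
  fixes l :: "'n::finite \<Rightarrow> real"
  assumes pos: "\<And>j. l j > 0" and s: "(\<Sum>j\<in>UNIV. l j) = real CARD('n)"
  shows "(\<Prod>j\<in>UNIV. l j) \<le> 1"
proof -
  have pp: "(\<Prod>j\<in>UNIV. l j) > 0" using pos by (simp add: prod_pos)
  have nz: "\<And>j. j \<in> UNIV \<Longrightarrow> l j \<noteq> 0" using pos by (metis less_irrefl)
  have "ln (\<Prod>j\<in>UNIV. l j) = (\<Sum>j\<in>UNIV. ln (l j))" by (rule ln_prod[OF finite nz])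
  also have "\<dots> \<le> (\<Sum>j\<in>UNIV. l j - 1)" using pos by (intro sum_mono ln_le_minus_one) auto
  also have "\<dots> = 0" using s by (simp add: sum_subtractf)
  finally show ?thesis using pp by simp
qed

lemma det_diagm: "det (diagm l) = (\<Prod>j\<in>UNIV. l j)"
  by (subst det_diagonal) (auto simp: diagm_def)

lemma hadamard:
  fixes M :: "real^'n^'n"
  shows "\<bar>det M\<bar> \<le> (\<Prod>j\<in>UNIV. norm (column j M))"
proof (cases "det M = 0")
  case True
  thus ?thesis by (simp add: prod_nonneg)
next
  case False
  define d where "d j = norm (column j M)" for j
  have dpos: "d j > 0" for j
    using False det_zero_column(1)[of j M] by (auto simp: d_def)
  define N where "N = M ** diagm (\<lambda>j. inverse (d j))"
  have Nij: "N $ i $ j = M $ i $ j / d j" for i j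
    by (simp add: N_def matrix_matrix_mult_def diagm_def if_distrib field_simps cong: if_cong)
  have colN: "column j N = inverse (d j) *\<^sub>R column j M" for j
    by (simp add: vec_eq_iff column_def Nij field_simps)
  have ncol: "norm (column j N) = 1" for j
    using dpos[of j] by (simp add: colN d_def)
  have detN: "det N = det M * (\<Prod>j\<in>UNIV. inverse (d j))"
    by (simp add: N_def det_mul det_diagm)
  have pinv: "(\<Prod>j\<in>UNIV. inverse (d j)) = inverse (\<Prod>j\<in>UNIV. d j)"
    using prod_inversef[of d UNIV] by (simp add: o_def)
  have pd: "(\<Prod>j\<in>UNIV. d j) > 0" using dpos by (simp add: prod_pos)
  have "det N \<noteq> 0" using False pd by (simp add: detN pinv less_imp_neq[symmetric])
  define H where "H = transpose N ** N"
  have symH: "transpose H = H" by (simp add: H_def gram_sym)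
  obtain l :: "'n \<Rightarrow> real" where l: "det H = (\<Prod>j\<in>UNIV. l j)" "trace H = (\<Sum>j\<in>UNIV. l j)"
    "mat_eigenvalues H = range l"
    using sym_facts[OF symH] by blast
  have lpos: "l j > 0" for j
    using pd_eig_pos[OF \<open>det N \<noteq> 0\<close>] l(3) by (auto simp: H_def)
  have "trace H = real CARD('n)"
  proof -
    have "H $ j $ j = 1" for j
      using ncol[of j] by (simp add: H_def matrix_mult_transpose_dot_column norm_eq_1)
    thus ?thesis by (simp add: trace_def)
  qed
  hence "(\<Prod>j\<in>UNIV. l j) \<le> 1" using prod_le_one[OF lpos] l(2) by simp
  moreover have "det H = (det N)^2" by (simp add: H_def det_mul power2_eq_square)
  ultimately have "(det N)^2 \<le> 1" using l(1) by simp
  hence "\<bar>det N\<bar> \<le> 1" by (simp add: abs_square_le_1)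
  hence "\<bar>det M\<bar> * inverse (\<Prod>j\<in>UNIV. d j) \<le> 1" using pd by (simp add: detN pinv abs_mult)
  thus ?thesis using pd by (simp add: d_def[symmetric] field_simps)
qed


theorem theorem7:
  fixes A :: "real^'n^'n" and b :: "real^'n"
  assumes "invertible A"
  defines "xs \<equiv> matrix_inv A *v b"
      and "Q \<equiv> transpose A ** A"
      and "w \<equiv> transpose A *v b"
  defines "qmin \<equiv> Min ((\<lambda>j. norm (column j Q)) ` UNIV)"
      and "lmin \<equiv> min_eigenvalue Q"
  defines "tau \<equiv> (\<Prod>j\<in>UNIV. norm (column j Q)) * norm w / (qmin * lmin ^ CARD('n))"
      and "tau' \<equiv> (\<Prod>j\<in>UNIV. norm (column j Q)) * norm w / (qmin * det Q)"
  shows "(\<forall>i. xs $ i \<ge> - tau' \<and> - tau' \<ge> - tau) \<and> tau \<ge> tau' \<and> tau' \<ge> t_star A b"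
proof -
  define Ai where "Ai = matrix_inv A"
  have inv: "A ** Ai = mat 1 \<and> Ai ** A = mat 1"
    using assms(1) unfolding invertible_def matrix_inv_def Ai_def by (rule someI_ex)
  have dA: "det A \<noteq> 0" using assms(1) invertible_det_nz by blast
  have symQ: "transpose Q = Q" by (simp add: Q_def gram_sym)
  have detQ: "det Q = (det A)^2" by (simp add: Q_def det_mul power2_eq_square)
  hence dQpos: "det Q > 0" using dA by simp
  have Axs: "A *v xs = b" unfolding xs_def Ai_def[symmetric]
    by (simp add: matrix_vector_mul_assoc inv)
  have Qxs: "Q *v xs = w" unfolding Q_def w_def
    by (simp add: matrix_vector_mul_assoc[symmetric] Axs)
  define c where "c j = norm (column j Q)" for j
  define Pc where "Pc = (\<Prod>j\<in>UNIV. c j)"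
  have cpos: "c j > 0" for j
    using dQpos det_zero_column(1)[of j Q] by (auto simp: c_def)
  have qmin_eq: "qmin = Min (range c)" by (simp add: qmin_def c_def)
  have qmin_le: "qmin \<le> c j" for j unfolding qmin_eq by (rule Min_le) auto
  have "qmin \<in> range c" unfolding qmin_eq by (rule Min_in) auto
  hence qpos: "qmin > 0" using cpos by auto
  have Pcnn: "Pc \<ge> 0" unfolding Pc_def using cpos by (simp add: prod_nonneg less_imp_le)
  have tau'_eq: "tau' = Pc * norm w / (qmin * det Q)" by (simp add: tau'_def Pc_def c_def)
  \<comment> \<open>Cramer + Hadamard\<close>
  have xs_lb: "xs $ k \<ge> - tau'" for k
  proof -
    define Qk where "Qk = (\<chi> i j. if j = k then w $ i else Q $ i $ j)"
    have "xs = (\<chi> k. det(\<chi> i j. if j=k then w$i else Q$i$j) / det Q)"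
      using cramer[of Q xs w] dQpos Qxs by simp
    hence xk: "xs $ k = det Qk / det Q" by (simp add: Qk_def)
    have colQk: "norm (column j Qk) = (if j = k then norm w else c j)" for j
      by (simp add: Qk_def column_def c_def)
    define R where "R = (\<Prod>j\<in>UNIV - {k}. c j)"
    have Rnn: "R \<ge> 0" unfolding R_def using cpos by (simp add: prod_nonneg less_imp_le)
    have "(\<Prod>j\<in>UNIV. norm (column j Qk)) = norm w * R"
    proof -
      have "(\<Prod>j\<in>UNIV. norm (column j Qk)) = norm (column k Qk) * (\<Prod>j\<in>UNIV - {k}. norm (column j Qk))"
        by (simp add: prod.remove)
      also have "(\<Prod>j\<in>UNIV - {k}. norm (column j Qk)) = R"
        unfolding R_def by (rule prod.cong) (auto simp: colQk)
      finally show ?thesis by (simp add: colQk)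
    qed
    hence hk: "\<bar>det Qk\<bar> \<le> norm w * R" using hadamard[of Qk] by simp
    have "Pc = c k * R" unfolding Pc_def R_def by (simp add: prod.remove)
    hence "qmin * R \<le> Pc" using qmin_le[of k] Rnn by (simp add: mult_right_mono)
    hence "R \<le> Pc / qmin" using qpos by (simp add: field_simps)
    hence "norm w * R \<le> norm w * (Pc / qmin)" by (rule mult_left_mono) simp
    hence "\<bar>det Qk\<bar> \<le> Pc * norm w / qmin" using hk by (simp add: field_simps)
    hence "\<bar>det Qk\<bar> / det Q \<le> (Pc * norm w / qmin) / det Q" using dQpos by (intro divide_right_mono) auto
    also have "\<dots> = tau'" unfolding tau'_eq by simp
    finally have "\<bar>det Qk\<bar> / det Q \<le> tau'" .
    moreover have "- (\<bar>det Qk\<bar> / det Q) \<le> det Qk / det Q" using dQpos by (simp add: field_simps)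
    ultimately show ?thesis using xk by linarith
  qed
  obtain l :: "'n \<Rightarrow> real" where l: "det Q = (\<Prod>j\<in>UNIV. l j)" "mat_eigenvalues Q = range l"
    using sym_facts[OF symQ] by blast
  have lmin_eq: "lmin = Min (range l)" by (simp add: lmin_def min_eigenvalue_def l(2))
  have "lmin \<in> range l" unfolding lmin_eq by (rule Min_in) auto
  hence lpos: "lmin > 0" using pd_eig_pos[OF dA] l(2) by (auto simp: Q_def)
  have lle: "lmin \<le> l j" for j unfolding lmin_eq by (rule Min_le) auto
  have "lmin ^ CARD('n) = (\<Prod>j\<in>(UNIV::'n set). lmin)" by simp
  also have "\<dots> \<le> det Q" unfolding l(1) using lpos lle by (intro prod_mono) (auto simp: less_imp_le)
  finally have ldet: "lmin ^ CARD('n) \<le> det Q" .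
  have tt: "tau' \<le> tau"
  proof -
    have "Pc * norm w / (qmin * det Q) \<le> Pc * norm w / (qmin * lmin ^ CARD('n))"
      using qpos lpos ldet Pcnn dQpos by (intro divide_left_mono mult_left_mono) (auto intro!: mult_pos_pos)
    thus ?thesis by (simp add: tau'_eq tau_def Pc_def c_def)
  qed
  define T where "T = {t. \<exists>x::real^'n. (\<forall>i. x $ i \<ge> 0) \<and> A *v (x - t *\<^sub>R (1::real^'n)) = b}"
  have "tau' \<in> T"
  proof -
    define x where "x = xs + tau' *\<^sub>R (1::real^'n)"
    have "\<forall>i. x $ i \<ge> 0" proof
      fix i show "x $ i \<ge> 0" using xs_lb[of i] by (simp add: x_def)
    qed
    moreover have "A *v (x - tau' *\<^sub>R (1::real^'n)) = b" by (simp add: x_def Axs)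
    ultimately show ?thesis unfolding T_def by blast
  qed
  moreover have "bdd_below T"
  proof
    fix t assume "t \<in> T"
    then obtain x :: "real^'n" where x: "\<forall>i. x $ i \<ge> 0" "A *v (x - t *\<^sub>R 1) = b" unfolding T_def by blast
    have "x - t *\<^sub>R 1 = Ai *v (A *v (x - t *\<^sub>R 1))" by (simp add: matrix_vector_mul_assoc inv)
    also have "\<dots> = xs" by (simp add: x(2) xs_def Ai_def)
    finally have "(x - t *\<^sub>R 1) $ undefined = xs $ undefined" by simp
    hence "x $ undefined - t = xs $ undefined" by simp
    moreover have "x $ undefined \<ge> 0" using x(1) by blast
    ultimately show "- xs $ undefined \<le> t" by linarith
  qed
  ultimately have "t_star A b \<le> tau'" unfolding t_star_def T_def[symmetric] by (rule cInf_lower)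
  show ?thesis using xs_lb tt \<open>t_star A b \<le> tau'\<close> by simp
qed

end
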